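(* $\mathbb{P}(\mathsf{FDqRA})=\mathsf{EDqRA}$ (up to isomorphism): every algebra in $\mathsf{EDqRA}$ is isomorphic to a direct product of algebras in $\mathsf{FDqRA}$, and every direct product of a family of algebras in $\mathsf{FDqRA}$ is isomorphic to an algebra in $\mathsf{EDqRA}$.
   Context: For binary relations: converse $R^\smile$; composition $R\circ S=\{(x,y)\mid\exists z\,((x,z)\in R,(z,y)\in S)\}$; functions are identified with their graphs. Order automorphism: bijection with $x\le y\iff\alpha(x)\le\alpha(y)$; dual order automorphism: bijection with $x\le y\iff\beta(y)\le\beta(x)$; self-inverse: $\beta\circ\beta=\mathrm{id}$. Let $(X,\le)$ be a poset, $E$ an equivalence relation on $X$ with ${\le}\subseteq E$, $\alpha$ an order automorphism and $\beta$ a self-inverse dual order automorphism of $(X,\le)$ with $\alpha,\beta\subseteq E$ and $\beta=\alpha\circ\beta\circ\alpha$. Order $E$ by $(u,v)\preceq(x,y)$ iff $x\le u$ and $v\le y$, write $\mathbf E=(E,\preceq)$, and let $R^c=E\setminus R$. Then $\mathbf{Dq}(\mathbf E)=\langle\mathsf{Up}(\mathbf E),\cap,\cup,\circ,1,0,{\sim},-,'\rangle$ is the algebra of up-sets of $\mathbf E$ with $1={\le}$, $0=\alpha\circ({\le}^c)^\smile$, ${\sim}R=(R^\smile\circ0^c)^c$, $-R=(0^c\circ R^\smile)^c$, $R'=\alpha\circ\beta\circ R^c\circ\beta$. $\mathsf{EDqRA}$ is the class of all such algebras $\mathbf{Dq}(\mathbf E)$ (equivalence distributive quasi relation algebras);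 $\mathsf{FDqRA}$ is the class of those with $E=X^2$ (full distributive quasi relation algebras). $\mathbb{P}(\mathsf K)$ denotes the class of direct products of families of members of $\mathsf K$. *)

theory Defs
  imports Main "HOL-Library.FuncSet"
begin

record 'c dq_alg =
  carrier :: "'c set"
  meet :: "'c \<Rightarrow> 'c \<Rightarrow> 'c"
  join :: "'c \<Rightarrow> 'c \<Rightarrow> 'c"
  comp :: "'c \<Rightarrow> 'c \<Rightarrow> 'c"
  one :: "'c"
  zero :: "'c"
  tilde :: "'c \<Rightarrow> 'c"
  minus :: "'c \<Rightarrow> 'c"
  prime :: "'c \<Rightarrow> 'c"

definition dq_iso :: "'c dq_alg \<Rightarrow> 'd dq_alg \<Rightarrow> ('c \<Rightarrow> 'd) \<Rightarrow> bool" where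
  "dq_iso A B h \<longleftrightarrow>
     bij_betw h (carrier A) (carrier B) \<and>
     (\<forall>x\<in>carrier A. \<forall>y\<in>carrier A.
        h (meet A x y) = meet B (h x) (h y) \<and>
        h (join A x y) = join B (h x) (h y) \<and>
        h (comp A x y) = comp B (h x) (h y)) \<and>
     h (one A) = one B \<and> h (zero A) = zero B \<and>
     (\<forall>x\<in>carrier A. h (tilde A x) = tilde B (h x) \<and>
        h (minus A x) = minus B (h x) \<and> h (prime A x) = prime B (h x))"

definition dq_isomorphic :: "'c dq_alg \<Rightarrow> 'd dq_alg \<Rightarrow> bool" where
  "dq_isomorphic A B \<longleftrightarrow> (\<exists>h. dq_iso A B h)"

definition dq_prod :: "'i set \<Rightarrow> ('i \<Rightarrow> 'c dq_alg) \<Rightarrow> ('i \<Rightarrow> 'c) dq_alg" where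
  "dq_prod I F =
    \<lparr> carrier = (\<Pi>\<^sub>E i\<in>I. carrier (F i)),
      meet = (\<lambda>f g. \<lambda>i\<in>I. meet (F i) (f i) (g i)),
      join = (\<lambda>f g. \<lambda>i\<in>I. join (F i) (f i) (g i)),
      comp = (\<lambda>f g. \<lambda>i\<in>I. comp (F i) (f i) (g i)),
      one = (\<lambda>i\<in>I. one (F i)),
      zero = (\<lambda>i\<in>I. zero (F i)),
      tilde = (\<lambda>f. \<lambda>i\<in>I. tilde (F i) (f i)),
      minus = (\<lambda>f. \<lambda>i\<in>I. minus (F i) (f i)),
      prime = (\<lambda>f. \<lambda>i\<in>I. prime (F i) (f i)) \<rparr>"

definition fgraph :: "'a set \<Rightarrow> ('a \<Rightarrow> 'a) \<Rightarrow> 'a rel" where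
  "fgraph X f = {(x, f x) | x. x \<in> X}"

definition order_automorphism :: "'a set \<Rightarrow> 'a rel \<Rightarrow> ('a \<Rightarrow> 'a) \<Rightarrow> bool" where
  "order_automorphism X le a \<longleftrightarrow> bij_betw a X X \<and>
     (\<forall>x\<in>X. \<forall>y\<in>X. (x, y) \<in> le \<longleftrightarrow> (a x, a y) \<in> le)"

definition dual_order_automorphism :: "'a set \<Rightarrow> 'a rel \<Rightarrow> ('a \<Rightarrow> 'a) \<Rightarrow> bool" where
  "dual_order_automorphism X le b \<longleftrightarrow> bij_betw b X X \<and>
     (\<forall>x\<in>X. \<forall>y\<in>X. (x, y) \<in> le \<longleftrightarrow> (b y, b x) \<in> le)"

definition dq_frame :: "'a set \<Rightarrow> 'a rel \<Rightarrow> 'a rel \<Rightarrow> ('a \<Rightarrow> 'a) \<Rightarrow> ('a \<Rightarrow> 'a) \<Rightarrow> bool" where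
  "dq_frame X le E a b \<longleftrightarrow>
     partial_order_on X le \<and>
     equiv X E \<and> le \<subseteq> E \<and>
     order_automorphism X le a \<and>
     dual_order_automorphism X le b \<and>
     fgraph X b O fgraph X b = Id_on X \<and>
     fgraph X a \<subseteq> E \<and> fgraph X b \<subseteq> E \<and>
     fgraph X b = fgraph X a O fgraph X b O fgraph X a"

definition E_below :: "'a rel \<Rightarrow> 'a \<times> 'a \<Rightarrow> 'a \<times> 'a \<Rightarrow> bool" where
  "E_below le p q \<longleftrightarrow> (fst q, fst p) \<in> le \<and> (snd p, snd q) \<in> le"

definition up_sets :: "'a rel \<Rightarrow> 'a rel \<Rightarrow> 'a rel set" where
  "up_sets le E = {R. R \<subseteq> E \<and> (\<forall>p\<in>R. \<forall>q\<in>E. E_below le p q \<longrightarrow> q \<in> R)}"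

definition Dq_zero :: "'a set \<Rightarrow> 'a rel \<Rightarrow> 'a rel \<Rightarrow> ('a \<Rightarrow> 'a) \<Rightarrow> 'a rel" where
  "Dq_zero X le E a = fgraph X a O (E - le)\<inverse>"

definition Dq :: "'a set \<Rightarrow> 'a rel \<Rightarrow> 'a rel \<Rightarrow> ('a \<Rightarrow> 'a) \<Rightarrow> ('a \<Rightarrow> 'a) \<Rightarrow> 'a rel dq_alg" where
  "Dq X le E a b =
    \<lparr> carrier = up_sets le E,
      meet = (\<inter>),
      join = (\<union>),
      comp = (\<lambda>R S. R O S),
      one = le,
      zero = Dq_zero X le E a,
      tilde = (\<lambda>R. E - (R\<inverse> O (E - Dq_zero X le E a))),
      minus = (\<lambda>R. E - ((E - Dq_zero X le E a) O R\<inverse>)),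
      prime = (\<lambda>R. fgraph X a O fgraph X b O (E - R) O fgraph X b) \<rparr>"

definition EDqRA :: "'a rel dq_alg \<Rightarrow> bool" where
  "EDqRA A \<longleftrightarrow> (\<exists>X le E a b. dq_frame X le E a b \<and> A = Dq X le E a b)"

definition FDqRA :: "'a rel dq_alg \<Rightarrow> bool" where
  "FDqRA A \<longleftrightarrow> (\<exists>X le a b. dq_frame X le (X \<times> X) a b \<and> A = Dq X le (X \<times> X) a b)"

end

theory Submission
  imports Defs
begin

lemma fgraph_mem[simp]: "(u, w) \<in> fgraph A f \<longleftrightarrow> u \<in> A \<and> w = f u"
  by (auto simp: fgraph_def)

lemma fgraph_comp_left: "(x, y) \<in> fgraph A f O S \<longleftrightarrow> x \<in> A \<and> (f x, y) \<in> S"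
  by (auto simp: fgraph_def)

lemma fgraph_comp_right: "(x, y) \<in> S O fgraph A f \<longleftrightarrow> (\<exists>z. (x, z) \<in> S \<and> z \<in> A \<and> y = f z)"
  by (auto simp: fgraph_def)

lemma Dq_zero_mem[simp]: "(x, z) \<in> Dq_zero X le E a \<longleftrightarrow> x \<in> X \<and> (z, a x) \<in> E \<and> (z, a x) \<notin> le"
  by (auto simp: Dq_zero_def)

lemma frame_facts:
  assumes "dq_frame X le E a b"
  shows "le \<subseteq> X \<times> X" "\<And>x. x \<in> X \<Longrightarrow> (x,x) \<in> le" "trans le" "antisym le"
    "E \<subseteq> X \<times> X" "\<And>x. x \<in> X \<Longrightarrow> (x,x) \<in> E" "sym E" "trans E" "le \<subseteq> E"
    "bij_betw a X X" "\<And>x y. x \<in> X \<Longrightarrow> y \<in> X \<Longrightarrow> (x, y) \<in> le \<longleftrightarrow> (a x, a y) \<in> le"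
    "bij_betw b X X" "\<And>x y. x \<in> X \<Longrightarrow> y \<in> X \<Longrightarrow> (x, y) \<in> le \<longleftrightarrow> (b y, b x) \<in> le"
    "\<And>x. x \<in> X \<Longrightarrow> (x, a x) \<in> E" "\<And>x. x \<in> X \<Longrightarrow> (x, b x) \<in> E"
    "\<And>x. x \<in> X \<Longrightarrow> b (b x) = x"
    "\<And>x. x \<in> X \<Longrightarrow> b x = a (b (a x))"
proof -
  note d = assms[unfolded dq_frame_def]
  show "le \<subseteq> X \<times> X" "\<And>x. x \<in> X \<Longrightarrow> (x,x) \<in> le" "trans le" "antisym le"
    using d by (auto simp: partial_order_on_def preorder_on_def refl_on_def)
  show "E \<subseteq> X \<times> X" "\<And>x. x \<in> X \<Longrightarrow> (x,x) \<in> E" "sym E" "trans E" "le \<subseteq> E"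
    using d by (auto simp: equiv_def refl_on_def)
  show "bij_betw a X X" "\<And>x y. x \<in> X \<Longrightarrow> y \<in> X \<Longrightarrow> (x, y) \<in> le \<longleftrightarrow> (a x, a y) \<in> le"
    "bij_betw b X X" "\<And>x y. x \<in> X \<Longrightarrow> y \<in> X \<Longrightarrow> (x, y) \<in> le \<longleftrightarrow> (b y, b x) \<in> le"
    using d by (auto simp: order_automorphism_def dual_order_automorphism_def)
  show "\<And>x. x \<in> X \<Longrightarrow> (x, a x) \<in> E" "\<And>x. x \<in> X \<Longrightarrow> (x, b x) \<in> E"
    using d by (auto simp: fgraph_def)
  have bX: "\<And>x. x \<in> X \<Longrightarrow> b x \<in> X" using d
    by (auto simp: dual_order_automorphism_def bij_betw_def)
  have aX: "\<And>x. x \<in> X \<Longrightarrow> a x \<in> X" using d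
    by (auto simp: order_automorphism_def bij_betw_def)
  show "\<And>x. x \<in> X \<Longrightarrow> b (b x) = x"
  proof -
    fix x assume x: "x \<in> X"
    have "(x, b (b x)) \<in> fgraph X b O fgraph X b" using x bX by (auto simp: fgraph_def)
    then show "b (b x) = x" using d by auto
  qed
  show "\<And>x. x \<in> X \<Longrightarrow> b x = a (b (a x))"
  proof -
    fix x assume x: "x \<in> X"
    have "(x, a (b (a x))) \<in> fgraph X a O fgraph X b O fgraph X a"
      unfolding fgraph_def using x bX aX by blast
    then have "(x, a (b (a x))) \<in> fgraph X b" using d by simp
    then show "b x = a (b (a x))" by (auto simp: fgraph_def)
  qed
qed

locale blk =
  fixes X :: "'a set" and le E :: "'a rel" and a b :: "'a \<Rightarrow> 'a"
    and I :: "'i set" and P :: "'i \<Rightarrow> 'a set"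
  assumes fr: "dq_frame X le E a b"
    and Eeq: "E = (\<Union>i\<in>I. P i \<times> P i)"
    and disj: "\<And>i j. i \<in> I \<Longrightarrow> j \<in> I \<Longrightarrow> i \<noteq> j \<Longrightarrow> P i \<inter> P j = {}"
begin

lemmas F = frame_facts[OF fr]

lemma PX: "i \<in> I \<Longrightarrow> P i \<subseteq> X"
  using F(5) Eeq by blast

lemma Eblk1: "i \<in> I \<Longrightarrow> x \<in> P i \<Longrightarrow> (x,y) \<in> E \<longleftrightarrow> y \<in> P i"
  unfolding Eeq using disj by auto

lemma Eblk2: "i \<in> I \<Longrightarrow> x \<in> P i \<Longrightarrow> (y,x) \<in> E \<longleftrightarrow> y \<in> P i"
  unfolding Eeq using disj by auto

lemma XP: "x \<in> X \<Longrightarrow> \<exists>i\<in>I. x \<in> P i"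
  using F(6) Eeq by blast

lemma aP: "i \<in> I \<Longrightarrow> x \<in> P i \<Longrightarrow> a x \<in> P i"
  using Eblk1 F(14) PX by blast

lemma bP: "i \<in> I \<Longrightarrow> x \<in> P i \<Longrightarrow> b x \<in> P i"
  using Eblk1 F(15) PX by blast

lemma leP: "i \<in> I \<Longrightarrow> x \<in> P i \<Longrightarrow> (x,y) \<in> le \<Longrightarrow> y \<in> P i"
  using Eblk1 F(9) by blast

lemma leP2: "i \<in> I \<Longrightarrow> x \<in> P i \<Longrightarrow> (y,x) \<in> le \<Longrightarrow> y \<in> P i"
  using Eblk2 F(9) by blast

lemma bij_blk:
  assumes i: "i \<in> I" and bj: "bij_betw f X X" and fE: "\<And>x. x \<in> X \<Longrightarrow> (x, f x) \<in> E"
  shows "bij_betw f (P i) (P i)"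
proof -
  have fP: "\<And>x. x \<in> P i \<Longrightarrow> f x \<in> P i" using Eblk1[OF i] fE PX[OF i] by blast
  have "inj_on f (P i)" using bj PX[OF i] by (meson bij_betw_def inj_on_subset)
  moreover have "f ` P i = P i"
  proof
    show "f ` P i \<subseteq> P i" using fP by blast
    show "P i \<subseteq> f ` P i"
    proof
      fix y assume y: "y \<in> P i"
      then have "y \<in> X" using PX[OF i] by blast
      then obtain x where x: "x \<in> X" "y = f x" using bj by (metis bij_betw_imp_surj_on imageE)
      then have "x \<in> P i" using fE[OF x(1)] Eblk2[OF i y] by simp
      then show "y \<in> f ` P i" using x by blast
    qed
  qed
  ultimately show ?thesis by (simp add: bij_betw_def)
qed

lemma frame_blk: 
  assumes i: "i \<in> I"
  shows "dq_frame (P i) (le \<inter> P i \<times> P i) (P i \<times> P i) a b"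
proof -
  note PXi = PX[OF i]
  have po: "partial_order_on (P i) (le \<inter> P i \<times> P i)"
    using F(2,3,4) PXi unfolding partial_order_on_def preorder_on_def refl_on_def
    by (auto simp: trans_def antisym_def)
  have eq: "equiv (P i) (P i \<times> P i)" by (auto simp: equiv_def refl_on_def sym_def trans_def)
  have oa: "order_automorphism (P i) (le \<inter> P i \<times> P i) a"
    unfolding order_automorphism_def
  proof (intro conjI ballI)
    show "bij_betw a (P i) (P i)" using bij_blk[OF i F(10) F(14)] .
    fix x y assume "x \<in> P i" "y \<in> P i"
    then show "(x, y) \<in> le \<inter> P i \<times> P i \<longleftrightarrow> (a x, a y) \<in> le \<inter> P i \<times> P i"
      using F(11)[of x y] aP[OF i] PXi by auto
  qed
  have doa: "dual_order_automorphism (P i) (le \<inter> P i \<times> P i) b"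
    unfolding dual_order_automorphism_def
  proof (intro conjI ballI)
    show "bij_betw b (P i) (P i)" using bij_blk[OF i F(12) F(15)] .
    fix x y assume "x \<in> P i" "y \<in> P i"
    then show "(x, y) \<in> le \<inter> P i \<times> P i \<longleftrightarrow> (b y, b x) \<in> le \<inter> P i \<times> P i"
      using F(13)[of x y] bP[OF i] PXi by auto
  qed
  have g1: "fgraph (P i) b O fgraph (P i) b = Id_on (P i)"
  proof -
    have "\<And>x. x \<in> P i \<Longrightarrow> b (b x) = x" using F(16) PXi by blast
    then show ?thesis using bP[OF i] by (auto simp: Id_on_def)
  qed
  have g2: "fgraph (P i) b = fgraph (P i) a O fgraph (P i) b O fgraph (P i) a"
  proof -
    have ba: "\<And>x. x \<in> P i \<Longrightarrow> b x = a (b (a x))" using F(17) PXi by blast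
    show ?thesis
    proof (intro equalityI subsetI)
      fix p assume "p \<in> fgraph (P i) b"
      then obtain x where x: "x \<in> P i" "p = (x, b x)" by (auto simp: fgraph_def)
      have "(x, a x) \<in> fgraph (P i) a" using x by simp
      moreover have "(a x, b (a x)) \<in> fgraph (P i) b" using x aP[OF i] by simp
      moreover have "(b (a x), a (b (a x))) \<in> fgraph (P i) a" using x aP[OF i] bP[OF i] by simp
      ultimately show "p \<in> fgraph (P i) a O fgraph (P i) b O fgraph (P i) a"
        using x ba[OF x(1)] by (metis relcomp.relcompI)
    next
      fix p assume "p \<in> fgraph (P i) a O fgraph (P i) b O fgraph (P i) a"
      then obtain x y z w where "p = (x, w)" "(x, y) \<in> fgraph (P i) a" "(y, z) \<in> fgraph (P i) b"
        "(z, w) \<in> fgraph (P i) a" by blast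
      then have "x \<in> P i" "p = (x, a (b (a x)))" by simp_all
      then show "p \<in> fgraph (P i) b" using ba by simp
    qed
  qed
  have g3: "fgraph (P i) a \<subseteq> P i \<times> P i" "fgraph (P i) b \<subseteq> P i \<times> P i"
    unfolding fgraph_def using aP[OF i] bP[OF i] by auto
  show ?thesis unfolding dq_frame_def using po eq oa doa g1 g2 g3 by simp
qed

lemma RP1: "R \<subseteq> E \<Longrightarrow> i \<in> I \<Longrightarrow> (x,y) \<in> R \<Longrightarrow> x \<in> P i \<Longrightarrow> y \<in> P i"
  using Eblk1 by blast
lemma RP2: "R \<subseteq> E \<Longrightarrow> i \<in> I \<Longrightarrow> (x,y) \<in> R \<Longrightarrow> y \<in> P i \<Longrightarrow> x \<in> P i"
  using Eblk2 by blast

lemma comp_blk: "R \<subseteq> E \<Longrightarrow> S \<subseteq> E \<Longrightarrow> i \<in> I \<Longrightarrow>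
  (R O S) \<inter> P i \<times> P i = (R \<inter> P i \<times> P i) O (S \<inter> P i \<times> P i)"
  by (auto dest: RP1)

lemma zero_blk: assumes i: "i \<in> I" shows
  "Dq_zero X le E a \<inter> P i \<times> P i = Dq_zero (P i) (le \<inter> P i \<times> P i) (P i \<times> P i) a"
proof (rule set_eqI, clarify)
  fix x z
  show "(x,z) \<in> Dq_zero X le E a \<inter> P i \<times> P i \<longleftrightarrow> (x,z) \<in> Dq_zero (P i) (le \<inter> P i \<times> P i) (P i \<times> P i) a"
  proof (cases "x \<in> P i")
    case True
    then have ax: "a x \<in> P i" "x \<in> X" using aP[OF i] PX[OF i] by auto
    have "(z, a x) \<in> E \<longleftrightarrow> z \<in> P i" using Eblk2[OF i ax(1)] .
    then show ?thesis using True ax by auto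
  next
    case False then show ?thesis by simp
  qed
qed

lemma tilde_blk: assumes R: "R \<subseteq> E" and i: "i \<in> I" shows
  "(E - R\<inverse> O (E - Dq_zero X le E a)) \<inter> P i \<times> P i
  = P i \<times> P i - (R \<inter> P i \<times> P i)\<inverse> O (P i \<times> P i - Dq_zero (P i) (le \<inter> P i \<times> P i) (P i \<times> P i) a)"
proof (rule set_eqI, clarify)
  fix x y
  let ?Z = "Dq_zero X le E a"
  show "(x,y) \<in> (E - R\<inverse> O (E - ?Z)) \<inter> P i \<times> P i \<longleftrightarrow>
    (x,y) \<in> P i \<times> P i - (R \<inter> P i \<times> P i)\<inverse> O (P i \<times> P i - Dq_zero (P i) (le \<inter> P i \<times> P i) (P i \<times> P i) a)"
  proof (cases "x \<in> P i \<and> y \<in> P i")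
    case True
    have z1: "\<And>z. (z,x) \<in> R \<Longrightarrow> z \<in> P i" using RP2[OF R i] True by blast
    have z2: "\<And>z. z \<in> P i \<Longrightarrow> (z,y) \<in> E" using Eblk2[OF i] True by blast
    have xy: "(x,y) \<in> E" using Eblk1[OF i] True by blast
    show ?thesis unfolding zero_blk[OF i, symmetric] using True z1 z2 xy by auto
  next
    case False then show ?thesis by blast
  qed
qed

lemma minus_blk: assumes R: "R \<subseteq> E" and i: "i \<in> I" shows
  "(E - (E - Dq_zero X le E a) O R\<inverse>) \<inter> P i \<times> P i
  = P i \<times> P i - (P i \<times> P i - Dq_zero (P i) (le \<inter> P i \<times> P i) (P i \<times> P i) a) O (R \<inter> P i \<times> P i)\<inverse>"
proof (rule set_eqI, clarify)
  fix x y
  let ?Z = "Dq_zero X le E a"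
  show "(x,y) \<in> (E - (E - ?Z) O R\<inverse>) \<inter> P i \<times> P i \<longleftrightarrow>
    (x,y) \<in> P i \<times> P i - (P i \<times> P i - Dq_zero (P i) (le \<inter> P i \<times> P i) (P i \<times> P i) a) O (R \<inter> P i \<times> P i)\<inverse>"
  proof (cases "x \<in> P i \<and> y \<in> P i")
    case True
    have z1: "\<And>z. (y,z) \<in> R \<Longrightarrow> z \<in> P i" using RP1[OF R i] True by blast
    have z2: "\<And>z. z \<in> P i \<Longrightarrow> (x,z) \<in> E" using Eblk1[OF i] True by blast
    have xy: "(x,y) \<in> E" using Eblk1[OF i] True by blast
    show ?thesis unfolding zero_blk[OF i, symmetric] using True z1 z2 xy by auto
  next
    case False then show ?thesis by blast
  qed
qed

lemma prime_blk: assumes R: "R \<subseteq> E" and i: "i \<in> I" shows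
  "(fgraph X a O fgraph X b O (E - R) O fgraph X b) \<inter> P i \<times> P i
  = fgraph (P i) a O fgraph (P i) b O (P i \<times> P i - R \<inter> P i \<times> P i) O fgraph (P i) b"
proof (rule set_eqI, clarify)
  fix x y
  have L: "(x,y) \<in> fgraph X a O fgraph X b O (E - R) O fgraph X b \<longleftrightarrow>
     x \<in> X \<and> (\<exists>z. z \<in> X \<and> y = b z \<and> (b (a x), z) \<in> E - R)"
    using F(5) bij_betw_apply[OF F(10)] bij_betw_apply[OF F(12)] by (auto simp: fgraph_comp_left fgraph_comp_right)
  have Rr: "(x,y) \<in> fgraph (P i) a O fgraph (P i) b O (P i \<times> P i - R \<inter> P i \<times> P i) O fgraph (P i) b \<longleftrightarrow>
     x \<in> P i \<and> (\<exists>z. z \<in> P i \<and> y = b z \<and> (b (a x), z) \<in> P i \<times> P i - R)"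
    using aP[OF i] by (auto simp: fgraph_comp_left fgraph_comp_right)
  show "(x,y) \<in> (fgraph X a O fgraph X b O (E - R) O fgraph X b) \<inter> P i \<times> P i \<longleftrightarrow>
    (x,y) \<in> fgraph (P i) a O fgraph (P i) b O (P i \<times> P i - R \<inter> P i \<times> P i) O fgraph (P i) b"
  proof (cases "x \<in> P i")
    case True
    have bax: "b (a x) \<in> P i" using aP[OF i] bP[OF i] True by blast
    have e: "\<And>z. (b (a x), z) \<in> E \<longleftrightarrow> z \<in> P i" using Eblk1[OF i bax] by blast
    have bz: "\<And>z. z \<in> P i \<Longrightarrow> b z \<in> P i \<and> z \<in> X" using bP[OF i] PX[OF i] by blast
    show ?thesis unfolding Int_iff L Rr using True e bz PX[OF i] bax by auto
  next
    case False then show ?thesis unfolding Int_iff Rr by blast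
  qed
qed


lemma BE: "i \<in> I \<Longrightarrow> P i \<times> P i \<subseteq> E"
  using Eblk1 by blast

lemma up_restrict:
  assumes R: "R \<in> up_sets le E" and i: "i \<in> I"
  shows "R \<inter> P i \<times> P i \<in> up_sets (le \<inter> P i \<times> P i) (P i \<times> P i)"
  unfolding up_sets_def
proof (intro CollectI conjI ballI impI)
  show "R \<inter> P i \<times> P i \<subseteq> P i \<times> P i" by blast
  fix p q assume p: "p \<in> R \<inter> P i \<times> P i" and q: "q \<in> P i \<times> P i"
    and pq: "E_below (le \<inter> P i \<times> P i) p q"
  have "q \<in> E" using q BE[OF i] by blast
  moreover have "E_below le p q" using pq by (simp add: E_below_def)
  ultimately have "q \<in> R" using R p unfolding up_sets_def by blast
  then show "q \<in> R \<inter> P i \<times> P i" using q by blast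
qed

lemma up_union:
  assumes f: "f \<in> (\<Pi>\<^sub>E i\<in>I. up_sets (le \<inter> P i \<times> P i) (P i \<times> P i))"
  shows "(\<Union>i\<in>I. f i) \<in> up_sets le E"
  unfolding up_sets_def
proof (intro CollectI conjI ballI impI)
  have fi: "\<And>i. i \<in> I \<Longrightarrow> f i \<in> up_sets (le \<inter> P i \<times> P i) (P i \<times> P i)" using f by blast
  show "(\<Union>i\<in>I. f i) \<subseteq> E" using fi BE unfolding up_sets_def by blast
  fix p q assume p: "p \<in> (\<Union>i\<in>I. f i)" and q: "q \<in> E" and pq: "E_below le p q"
  then obtain i where i: "i \<in> I" and pi: "p \<in> f i" by blast
  have pB: "p \<in> P i \<times> P i" using fi[OF i] pi unfolding up_sets_def by blast
  have l1: "(fst q, fst p) \<in> le" and l2: "(snd p, snd q) \<in> le" using pq by (auto simp: E_below_def)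
  have "fst q \<in> P i" using leP2[OF i _ l1] pB by auto
  moreover have "snd q \<in> P i" using leP[OF i _ l2] pB by auto
  ultimately have qB: "q \<in> P i \<times> P i" by (cases q) auto
  have "E_below (le \<inter> P i \<times> P i) p q" using l1 l2 pB qB by (auto simp: E_below_def)
  then have "q \<in> f i" using fi[OF i] pi qB unfolding up_sets_def by blast
  then show "q \<in> (\<Union>i\<in>I. f i)" using i by blast
qed

lemma restore: "R \<subseteq> E \<Longrightarrow> (\<Union>i\<in>I. R \<inter> P i \<times> P i) = R"
  using Eeq by blast

lemma restrict_union:
  assumes f: "f \<in> (\<Pi>\<^sub>E i\<in>I. up_sets (le \<inter> P i \<times> P i) (P i \<times> P i))" and i: "i \<in> I"
  shows "(\<Union>j\<in>I. f j) \<inter> P i \<times> P i = f i"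
proof -
  have fi: "\<And>j. j \<in> I \<Longrightarrow> f j \<subseteq> P j \<times> P j" using f unfolding up_sets_def by blast
  show ?thesis
  proof (intro equalityI subsetI)
    fix p assume "p \<in> (\<Union>j\<in>I. f j) \<inter> P i \<times> P i"
    then obtain j where j: "j \<in> I" "p \<in> f j" "p \<in> P i \<times> P i" by blast
    then have "p \<in> P j \<times> P j" using fi by blast
    then have "i = j" using disj[OF i j(1)] j(3) by blast
    then show "p \<in> f i" using j by simp
  next
    fix p assume "p \<in> f i" then show "p \<in> (\<Union>j\<in>I. f j) \<inter> P i \<times> P i" using fi[OF i] i by blast
  qed
qed

definition hblk :: "'a rel \<Rightarrow> 'i \<Rightarrow> 'a rel" where
  "hblk R = (\<lambda>i\<in>I. R \<inter> P i \<times> P i)"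

lemma hblk_bij: "bij_betw hblk (up_sets le E) (\<Pi>\<^sub>E i\<in>I. up_sets (le \<inter> P i \<times> P i) (P i \<times> P i))"
proof (rule bij_betw_byWitness[where f' = "\<lambda>f. \<Union>i\<in>I. f i"])
  show "\<forall>R\<in>up_sets le E. (\<Union>i\<in>I. hblk R i) = R"
    using restore unfolding hblk_def up_sets_def by auto
  show "\<forall>f\<in>\<Pi>\<^sub>E i\<in>I. up_sets (le \<inter> P i \<times> P i) (P i \<times> P i). hblk (\<Union>i\<in>I. f i) = f"
  proof
    fix f assume f: "f \<in> (\<Pi>\<^sub>E i\<in>I. up_sets (le \<inter> P i \<times> P i) (P i \<times> P i))"
    show "hblk (\<Union>i\<in>I. f i) = f"
    proof
      fix i show "hblk (\<Union>i\<in>I. f i) i = f i"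
        using restrict_union[OF f] f unfolding hblk_def by (cases "i \<in> I") (auto simp: PiE_def extensional_def)
    qed
  qed
  show "hblk ` up_sets le E \<subseteq> (\<Pi>\<^sub>E i\<in>I. up_sets (le \<inter> P i \<times> P i) (P i \<times> P i))"
    using up_restrict unfolding hblk_def by auto
  show "(\<lambda>f. \<Union>i\<in>I. f i) ` (\<Pi>\<^sub>E i\<in>I. up_sets (le \<inter> P i \<times> P i) (P i \<times> P i)) \<subseteq> up_sets le E"
    using up_union by blast
qed

lemma hblk_iso: "dq_iso (Dq X le E a b) (dq_prod I (\<lambda>i. Dq (P i) (le \<inter> P i \<times> P i) (P i \<times> P i) a b)) hblk"
  unfolding dq_iso_def
proof (intro conjI ballI)
  show "bij_betw hblk (carrier (Dq X le E a b)) (carrier (dq_prod I (\<lambda>i. Dq (P i) (le \<inter> P i \<times> P i) (P i \<times> P i) a b)))"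
    using hblk_bij by (simp add: Dq_def dq_prod_def)
  fix R S assume R: "R \<in> carrier (Dq X le E a b)" and S: "S \<in> carrier (Dq X le E a b)"
  have RE: "R \<subseteq> E" and SE: "S \<subseteq> E" using R S by (auto simp: Dq_def up_sets_def)
  show "hblk (meet (Dq X le E a b) R S) = meet (dq_prod I (\<lambda>i. Dq (P i) (le \<inter> P i \<times> P i) (P i \<times> P i) a b)) (hblk R) (hblk S)"
    by (auto simp: Dq_def dq_prod_def hblk_def intro!: restrict_ext)
  show "hblk (join (Dq X le E a b) R S) = join (dq_prod I (\<lambda>i. Dq (P i) (le \<inter> P i \<times> P i) (P i \<times> P i) a b)) (hblk R) (hblk S)"
    by (auto simp: Dq_def dq_prod_def hblk_def intro!: restrict_ext)
  show "hblk (comp (Dq X le E a b) R S) = comp (dq_prod I (\<lambda>i. Dq (P i) (le \<inter> P i \<times> P i) (P i \<times> P i) a b)) (hblk R) (hblk S)"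
    apply (simp add: Dq_def dq_prod_def hblk_def del: Dq_zero_mem)
    apply (rule restrict_ext)
    by (simp add: comp_blk[OF RE SE] del: Dq_zero_mem)
next
  show "hblk (one (Dq X le E a b)) = one (dq_prod I (\<lambda>i. Dq (P i) (le \<inter> P i \<times> P i) (P i \<times> P i) a b))"
    by (auto simp: Dq_def dq_prod_def hblk_def intro!: restrict_ext)
  show "hblk (zero (Dq X le E a b)) = zero (dq_prod I (\<lambda>i. Dq (P i) (le \<inter> P i \<times> P i) (P i \<times> P i) a b))"
    apply (simp add: Dq_def dq_prod_def hblk_def del: Dq_zero_mem)
    apply (rule restrict_ext)
    by (simp add: zero_blk del: Dq_zero_mem)
next
  fix R assume R: "R \<in> carrier (Dq X le E a b)"
  have RE: "R \<subseteq> E" using R by (auto simp: Dq_def up_sets_def)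
  show "hblk (tilde (Dq X le E a b) R) = tilde (dq_prod I (\<lambda>i. Dq (P i) (le \<inter> P i \<times> P i) (P i \<times> P i) a b)) (hblk R)"
    apply (simp add: Dq_def dq_prod_def hblk_def del: Dq_zero_mem)
    apply (rule restrict_ext)
    by (simp add: tilde_blk[OF RE] del: Dq_zero_mem)
  show "hblk (minus (Dq X le E a b) R) = minus (dq_prod I (\<lambda>i. Dq (P i) (le \<inter> P i \<times> P i) (P i \<times> P i) a b)) (hblk R)"
    apply (simp add: Dq_def dq_prod_def hblk_def del: Dq_zero_mem)
    apply (rule restrict_ext)
    by (simp add: minus_blk[OF RE] del: Dq_zero_mem)
  show "hblk (prime (Dq X le E a b) R) = prime (dq_prod I (\<lambda>i. Dq (P i) (le \<inter> P i \<times> P i) (P i \<times> P i) a b)) (hblk R)"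
    apply (simp add: Dq_def dq_prod_def hblk_def del: Dq_zero_mem)
    apply (rule restrict_ext)
    by (simp add: prime_blk[OF RE] del: Dq_zero_mem)
qed

end


lemma E_quot:
  assumes eq: "equiv X E"
  shows "E = (\<Union>C\<in>X//E. C \<times> C)"
proof (intro equalityI subsetI)
  fix p assume p: "p \<in> E"
  obtain x y where xy: "p = (x,y)" by (cases p)
  have x: "x \<in> X" using eq p xy by (auto simp: equiv_def)
  have "x \<in> E``{x}" using equiv_class_self[OF eq x] .
  moreover have "y \<in> E``{x}" using p xy by simp
  ultimately show "p \<in> (\<Union>C\<in>X//E. C \<times> C)" using quotientI[OF x, of E] xy by blast
next
  fix p assume "p \<in> (\<Union>C\<in>X//E. C \<times> C)"
  then obtain C where C: "C \<in> X//E" "p \<in> C \<times> C" by blast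
  then obtain z where z: "C = E``{z}" "z \<in> X" by (auto elim: quotientE)
  obtain x y where xy: "p = (x,y)" by (cases p)
  have "(z,x) \<in> E" "(z,y) \<in> E" using C z xy by auto
  then show "p \<in> E" using eq xy unfolding equiv_def sym_def trans_def by blast
qed

theorem part1:
  fixes A :: "'a rel dq_alg"
  assumes "EDqRA A"
  shows "\<exists>(I :: 'a set set) (F :: 'a set \<Rightarrow> 'a rel dq_alg).
               (\<forall>i\<in>I. FDqRA (F i)) \<and> dq_isomorphic A (dq_prod I F)"
proof -
  obtain X le E a b where fr: "dq_frame X le E a b" and A: "A = Dq X le E a b"
    using assms by (auto simp: EDqRA_def)
  have eq: "equiv X E" using fr by (simp add: dq_frame_def)
  interpret blk X le E a b "X//E" "\<lambda>C. C"
  proof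
    show "dq_frame X le E a b" by fact
    show "E = (\<Union>C\<in>X//E. C \<times> C)" using E_quot[OF eq] .
    show "\<And>i j. i \<in> X // E \<Longrightarrow> j \<in> X // E \<Longrightarrow> i \<noteq> j \<Longrightarrow> i \<inter> j = {}"
      using quotient_disj[OF eq] by blast
  qed
  show ?thesis
  proof (intro exI conjI)
    show "\<forall>i\<in>X//E. FDqRA (Dq i (le \<inter> i \<times> i) (i \<times> i) a b)"
      using frame_blk unfolding FDqRA_def by blast
    show "dq_isomorphic A (dq_prod (X//E) (\<lambda>i. Dq i (le \<inter> i \<times> i) (i \<times> i) a b))"
      unfolding dq_isomorphic_def A using hblk_iso by blast
  qed
qed


lemma frame_intro:
  assumes le1: "le \<subseteq> X \<times> X" and le2: "\<And>x. x \<in> X \<Longrightarrow> (x,x) \<in> le" and le3: "trans le" and le4: "antisym le"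
    and E1: "E \<subseteq> X \<times> X" and E2: "\<And>x. x \<in> X \<Longrightarrow> (x,x) \<in> E" and E3: "sym E" and E4: "trans E" and leE: "le \<subseteq> E"
    and ab: "bij_betw a X X" and ao: "\<And>x y. x \<in> X \<Longrightarrow> y \<in> X \<Longrightarrow> (x, y) \<in> le \<longleftrightarrow> (a x, a y) \<in> le"
    and bb: "bij_betw b X X" and bo: "\<And>x y. x \<in> X \<Longrightarrow> y \<in> X \<Longrightarrow> (x, y) \<in> le \<longleftrightarrow> (b y, b x) \<in> le"
    and aE: "\<And>x. x \<in> X \<Longrightarrow> (x, a x) \<in> E" and bE: "\<And>x. x \<in> X \<Longrightarrow> (x, b x) \<in> E"
    and bbx: "\<And>x. x \<in> X \<Longrightarrow> b (b x) = x"
    and ba: "\<And>x. x \<in> X \<Longrightarrow> b x = a (b (a x))"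
  shows "dq_frame X le E a b"
proof -
  have aX: "\<And>x. x \<in> X \<Longrightarrow> a x \<in> X" by (rule bij_betw_apply[OF ab])
  have bX: "\<And>x. x \<in> X \<Longrightarrow> b x \<in> X" by (rule bij_betw_apply[OF bb])
  have po: "partial_order_on X le"
    unfolding partial_order_on_def preorder_on_def refl_on_def using le1 le2 le3 le4 by simp
  have eq: "equiv X E" unfolding equiv_def refl_on_def using E1 E2 E3 E4 by simp
  have oa: "order_automorphism X le a" unfolding order_automorphism_def using ab ao by simp
  have doa: "dual_order_automorphism X le b" unfolding dual_order_automorphism_def using bb bo by simp
  have g1: "fgraph X b O fgraph X b = Id_on X"
    using bbx bX by (auto simp: Id_on_def)
  have g2: "fgraph X b = fgraph X a O fgraph X b O fgraph X a"
  proof (intro equalityI subsetI)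
    fix p assume "p \<in> fgraph X b"
    then obtain x where x: "x \<in> X" "p = (x, b x)" by (auto simp: fgraph_def)
    have "(x, a x) \<in> fgraph X a" using x by simp
    moreover have "(a x, b (a x)) \<in> fgraph X b" using x aX by simp
    moreover have "(b (a x), a (b (a x))) \<in> fgraph X a" using x aX bX by simp
    ultimately show "p \<in> fgraph X a O fgraph X b O fgraph X a"
      using x ba[OF x(1)] by (metis relcomp.relcompI)
  next
    fix p assume "p \<in> fgraph X a O fgraph X b O fgraph X a"
    then obtain x y z w where "p = (x, w)" "(x, y) \<in> fgraph X a" "(y, z) \<in> fgraph X b"
      "(z, w) \<in> fgraph X a" by blast
    then have "x \<in> X" "p = (x, a (b (a x)))" by simp_all
    then show "p \<in> fgraph X b" using ba by simp
  qed
  have g3: "fgraph X a \<subseteq> E" "fgraph X b \<subseteq> E"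
    using aE bE by (auto simp: fgraph_def)
  show ?thesis unfolding dq_frame_def by (intro conjI po eq leE oa doa g1 g2 g3)
qed

lemma bij_sig:
  assumes "\<And>i. i \<in> I \<Longrightarrow> bij_betw (f i) (A i) (A i)"
  shows "bij_betw (\<lambda>(i,x). (i, f i x)) (Sigma I A) (Sigma I A)"
  unfolding bij_betw_def
proof
  show "inj_on (\<lambda>(i,x). (i, f i x)) (Sigma I A)"
    using assms unfolding inj_on_def bij_betw_def by auto
  show "(\<lambda>(i,x). (i, f i x)) ` Sigma I A = Sigma I A"
  proof (intro equalityI subsetI)
    fix p assume "p \<in> (\<lambda>(i,x). (i, f i x)) ` Sigma I A"
    then show "p \<in> Sigma I A" using assms bij_betw_apply by fastforce
  next
    fix p assume p: "p \<in> Sigma I A"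
    then obtain i y where iy: "p = (i,y)" "i \<in> I" "y \<in> A i" by blast
    then obtain x where "x \<in> A i" "y = f i x" using assms[OF iy(2)]
      by (metis bij_betw_imp_surj_on imageE)
    then show "p \<in> (\<lambda>(i,x). (i, f i x)) ` Sigma I A" using iy by force
  qed
qed

lemma rel_eqI2: "(\<And>i x j y. ((i,x),(j,y)) \<in> A \<longleftrightarrow> ((i,x),(j,y)) \<in> B) \<Longrightarrow> A = B"
  by auto

lemma dq_prod_cong: "(\<And>i. i \<in> I \<Longrightarrow> F i = G i) \<Longrightarrow> dq_prod I F = dq_prod I G"
  unfolding dq_prod_def by (simp cong: restrict_cong PiE_cong)

locale sig =
  fixes I :: "'i set" and Xf :: "'i \<Rightarrow> 'a set" and lef :: "'i \<Rightarrow> 'a rel"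
    and af bf :: "'i \<Rightarrow> 'a \<Rightarrow> 'a"
  assumes frs: "\<And>i. i \<in> I \<Longrightarrow> dq_frame (Xf i) (lef i) (Xf i \<times> Xf i) (af i) (bf i)"
begin

definition "XS = Sigma I Xf"
definition "leS = {((i,x),(j,y)). i = j \<and> i \<in> I \<and> (x,y) \<in> lef i}"
definition "ES = {((i,x),(j,y)). i = j \<and> i \<in> I \<and> x \<in> Xf i \<and> y \<in> Xf i}"
definition "aS = (\<lambda>(i,x). (i, af i x))"
definition "bS = (\<lambda>(i,x). (i, bf i x))"

lemma XS_mem[simp]: "(i,x) \<in> XS \<longleftrightarrow> i \<in> I \<and> x \<in> Xf i" by (simp add: XS_def)
lemma leS_mem[simp]: "((i,x),(j,y)) \<in> leS \<longleftrightarrow> i = j \<and> i \<in> I \<and> (x,y) \<in> lef i" by (simp add: leS_def)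
lemma ES_mem[simp]: "((i,x),(j,y)) \<in> ES \<longleftrightarrow> i = j \<and> i \<in> I \<and> x \<in> Xf i \<and> y \<in> Xf i" by (simp add: ES_def)
lemma aS_simp[simp]: "aS (i,x) = (i, af i x)" by (simp add: aS_def)
lemma bS_simp[simp]: "bS (i,x) = (i, bf i x)" by (simp add: bS_def)

lemma G1: "i \<in> I \<Longrightarrow> lef i \<subseteq> Xf i \<times> Xf i" by (rule frame_facts(1)[OF frs])
lemma G2: "i \<in> I \<Longrightarrow> x \<in> Xf i \<Longrightarrow> (x,x) \<in> lef i" by (rule frame_facts(2)[OF frs])
lemma G3: "i \<in> I \<Longrightarrow> trans (lef i)" by (rule frame_facts(3)[OF frs])
lemma G4: "i \<in> I \<Longrightarrow> antisym (lef i)" by (rule frame_facts(4)[OF frs])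
lemma G5: "i \<in> I \<Longrightarrow> bij_betw (af i) (Xf i) (Xf i)" by (rule frame_facts(10)[OF frs])
lemma G6: "i \<in> I \<Longrightarrow> x \<in> Xf i \<Longrightarrow> y \<in> Xf i \<Longrightarrow> (x, y) \<in> lef i \<longleftrightarrow> (af i x, af i y) \<in> lef i"
  by (rule frame_facts(11)[OF frs])
lemma G7: "i \<in> I \<Longrightarrow> bij_betw (bf i) (Xf i) (Xf i)" by (rule frame_facts(12)[OF frs])
lemma G8: "i \<in> I \<Longrightarrow> x \<in> Xf i \<Longrightarrow> y \<in> Xf i \<Longrightarrow> (x, y) \<in> lef i \<longleftrightarrow> (bf i y, bf i x) \<in> lef i"
  by (rule frame_facts(13)[OF frs])
lemma G9: "i \<in> I \<Longrightarrow> x \<in> Xf i \<Longrightarrow> af i x \<in> Xf i" by (rule bij_betw_apply[OF G5])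
lemma G10: "i \<in> I \<Longrightarrow> x \<in> Xf i \<Longrightarrow> bf i x \<in> Xf i" by (rule bij_betw_apply[OF G7])
lemma G11: "i \<in> I \<Longrightarrow> x \<in> Xf i \<Longrightarrow> bf i (bf i x) = x" by (rule frame_facts(16)[OF frs])
lemma G12: "i \<in> I \<Longrightarrow> x \<in> Xf i \<Longrightarrow> bf i x = af i (bf i (af i x))" by (rule frame_facts(17)[OF frs])
lemmas G = G1 G2 G3 G4 G5 G6 G7 G8 G9 G10 G11 G12

lemma G1a: "(x,y) \<in> lef i \<Longrightarrow> i \<in> I \<Longrightarrow> x \<in> Xf i" using G1 by blast
lemma G1b: "(x,y) \<in> lef i \<Longrightarrow> i \<in> I \<Longrightarrow> y \<in> Xf i" using G1 by blast

lemma XS_cases: "p \<in> XS \<Longrightarrow> (\<And>i u. p = (i,u) \<Longrightarrow> i \<in> I \<Longrightarrow> u \<in> Xf i \<Longrightarrow> thesis) \<Longrightarrow> thesis"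
  by (cases p) auto

lemma frameS: "dq_frame XS leS ES aS bS"
proof (rule frame_intro)
  show "leS \<subseteq> XS \<times> XS" by (auto dest: G1a G1b)
  show "\<And>x. x \<in> XS \<Longrightarrow> (x, x) \<in> leS" by (auto elim!: XS_cases intro: G2)
  show "trans leS" unfolding trans_def by (auto dest: G3[THEN transD])
  show "antisym leS" unfolding antisym_def by (auto dest: G4[THEN antisymD])
  show "ES \<subseteq> XS \<times> XS" by auto
  show "\<And>x. x \<in> XS \<Longrightarrow> (x, x) \<in> ES" by auto
  show "sym ES" unfolding sym_def by auto
  show "trans ES" unfolding trans_def by auto
  show "leS \<subseteq> ES" by (auto dest: G1a G1b)
  show "bij_betw aS XS XS" unfolding aS_def XS_def by (rule bij_sig[OF G5])
  show "bij_betw bS XS XS" unfolding bS_def XS_def by (rule bij_sig[OF G7])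
  show "\<And>x y. x \<in> XS \<Longrightarrow> y \<in> XS \<Longrightarrow> ((x, y) \<in> leS) = ((aS x, aS y) \<in> leS)"
  proof -
    fix x y assume "x \<in> XS" "y \<in> XS"
    then obtain i u j v where "x = (i,u)" "i \<in> I" "u \<in> Xf i" "y = (j,v)" "j \<in> I" "v \<in> Xf j"
      by (auto elim!: XS_cases)
    then show "((x, y) \<in> leS) = ((aS x, aS y) \<in> leS)" using G6[of i u v] by auto
  qed
  show "\<And>x y. x \<in> XS \<Longrightarrow> y \<in> XS \<Longrightarrow> ((x, y) \<in> leS) = ((bS y, bS x) \<in> leS)"
  proof -
    fix x y assume "x \<in> XS" "y \<in> XS"
    then obtain i u j v where "x = (i,u)" "i \<in> I" "u \<in> Xf i" "y = (j,v)" "j \<in> I" "v \<in> Xf j"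
      by (auto elim!: XS_cases)
    then show "((x, y) \<in> leS) = ((bS y, bS x) \<in> leS)" using G8[of i u v] by auto
  qed
  show "\<And>x. x \<in> XS \<Longrightarrow> (x, aS x) \<in> ES" by (auto elim!: XS_cases intro: G9)
  show "\<And>x. x \<in> XS \<Longrightarrow> (x, bS x) \<in> ES" by (auto elim!: XS_cases intro: G10)
  show "\<And>x. x \<in> XS \<Longrightarrow> bS (bS x) = x"
  proof -
    fix x assume "x \<in> XS"
    then obtain i u where "x = (i,u)" "i \<in> I" "u \<in> Xf i" by (auto elim!: XS_cases)
    then show "bS (bS x) = x" using G11[of i u] by simp
  qed
  show "\<And>x. x \<in> XS \<Longrightarrow> bS x = aS (bS (aS x))"
  proof -
    fix x assume "x \<in> XS"
    then obtain i u where "x = (i,u)" "i \<in> I" "u \<in> Xf i" by (auto elim!: XS_cases)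
    then show "bS x = aS (bS (aS x))" using G12[of i u] by simp
  qed
qed


definition hS :: "('i \<Rightarrow> 'a rel) \<Rightarrow> ('i \<times> 'a) rel" where
  "hS f = {((i,x),(j,y)). i = j \<and> i \<in> I \<and> (x,y) \<in> f i}"

definition gS :: "('i \<times> 'a) rel \<Rightarrow> 'i \<Rightarrow> 'a rel" where
  "gS R = (\<lambda>i\<in>I. {(x,y). ((i,x),(i,y)) \<in> R})"

lemma hS_mem[simp]: "((i,x),(j,y)) \<in> hS f \<longleftrightarrow> i = j \<and> i \<in> I \<and> (x,y) \<in> f i"
  by (simp add: hS_def)

lemma hS_restrict[simp]: "hS (restrict f I) = hS f"
  by (rule rel_eqI2) simp

lemma ZS_mem: "((i,x),(j,y)) \<in> Dq_zero XS leS ES aS \<longleftrightarrow>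
   i = j \<and> i \<in> I \<and> (x,y) \<in> Dq_zero (Xf i) (lef i) (Xf i \<times> Xf i) (af i)"
  using G9 by auto

lemma hS_comp: "hS f O hS g = hS (\<lambda>i. f i O g i)"
proof (rule rel_eqI2)
  fix i x j y
  show "((i,x),(j,y)) \<in> hS f O hS g \<longleftrightarrow> ((i,x),(j,y)) \<in> hS (\<lambda>i. f i O g i)"
  proof
    assume "((i,x),(j,y)) \<in> hS f O hS g" then show "((i,x),(j,y)) \<in> hS (\<lambda>i. f i O g i)" by auto
  next
    assume "((i,x),(j,y)) \<in> hS (\<lambda>i. f i O g i)"
    then obtain z where "i = j" "i \<in> I" "(x,z) \<in> f i" "(z,y) \<in> g i" by auto
    then have "((i,x),(i,z)) \<in> hS f" "((i,z),(j,y)) \<in> hS g" by simp_all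
    then show "((i,x),(j,y)) \<in> hS f O hS g" by blast
  qed
qed

lemma hS_conv: "(hS f)\<inverse> = hS (\<lambda>i. (f i)\<inverse>)"
  by (rule rel_eqI2) auto

lemma hS_diff: "hS f - hS g = hS (\<lambda>i. f i - g i)"
  by (rule rel_eqI2) auto

lemma ES_h: "ES = hS (\<lambda>i. Xf i \<times> Xf i)"
  by (rule rel_eqI2) auto

lemma ZS_h: "Dq_zero XS leS ES aS = hS (\<lambda>i. Dq_zero (Xf i) (lef i) (Xf i \<times> Xf i) (af i))"
  by (rule rel_eqI2) (simp only: ZS_mem hS_mem)

lemma fgraph_hA: "fgraph XS aS = hS (\<lambda>i. fgraph (Xf i) (af i))"
  by (rule rel_eqI2) auto

lemma fgraph_hB: "fgraph XS bS = hS (\<lambda>i. fgraph (Xf i) (bf i))"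
  by (rule rel_eqI2) auto

lemmas ZS_h2 = ZS_h[unfolded ES_h]

abbreviation "DP \<equiv> dq_prod I (\<lambda>i. Dq (Xf i) (lef i) (Xf i \<times> Xf i) (af i) (bf i))"
abbreviation "BS \<equiv> Dq XS leS ES aS bS"

lemma hS_bij: "bij_betw hS (\<Pi>\<^sub>E i\<in>I. up_sets (lef i) (Xf i \<times> Xf i)) (up_sets leS ES)"
proof (rule bij_betw_byWitness[where f' = gS])
  show "\<forall>f\<in>\<Pi>\<^sub>E i\<in>I. up_sets (lef i) (Xf i \<times> Xf i). gS (hS f) = f"
  proof
    fix f assume f: "f \<in> (\<Pi>\<^sub>E i\<in>I. up_sets (lef i) (Xf i \<times> Xf i))"
    show "gS (hS f) = f"
    proof
      fix i show "gS (hS f) i = f i"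
      proof (cases "i \<in> I")
        case True then show ?thesis by (simp add: gS_def)
      next
        case False then show ?thesis using PiE_arb[OF f False] by (simp add: gS_def)
      qed
    qed
  qed
  show "\<forall>R\<in>up_sets leS ES. hS (gS R) = R"
  proof
    fix R assume R: "R \<in> up_sets leS ES"
    then have RE: "R \<subseteq> ES" by (simp add: up_sets_def)
    show "hS (gS R) = R"
    proof (rule rel_eqI2)
      fix i x j y
      show "((i,x),(j,y)) \<in> hS (gS R) \<longleftrightarrow> ((i,x),(j,y)) \<in> R"
        using RE[THEN subsetD, of "((i,x),(j,y))"] by (auto simp: gS_def)
    qed
  qed
  show "hS ` (\<Pi>\<^sub>E i\<in>I. up_sets (lef i) (Xf i \<times> Xf i)) \<subseteq> up_sets leS ES"
  proof
    fix R assume "R \<in> hS ` (\<Pi>\<^sub>E i\<in>I. up_sets (lef i) (Xf i \<times> Xf i))"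
    then obtain f where f: "f \<in> (\<Pi>\<^sub>E i\<in>I. up_sets (lef i) (Xf i \<times> Xf i))" and R: "R = hS f" by blast
    have fi: "\<And>i. i \<in> I \<Longrightarrow> f i \<in> up_sets (lef i) (Xf i \<times> Xf i)" using f by blast
    have sub: "R \<subseteq> ES"
    proof (clarify)
      fix i x j y assume "((i,x),(j,y)) \<in> R"
      then have ij: "i = j" "i \<in> I" "(x,y) \<in> f i" using R by auto
      have "f i \<subseteq> Xf i \<times> Xf i" using fi[OF ij(2)] by (simp add: up_sets_def)
      then show "((i,x),(j,y)) \<in> ES" using ij by auto
    qed
    have up: "\<forall>p\<in>R. \<forall>q\<in>ES. E_below leS p q \<longrightarrow> q \<in> R"
    proof (clarify)
      fix i x j y k u l v
      assume p: "((i,x),(j,y)) \<in> R" and q: "((k,u),(l,v)) \<in> ES"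
        and pq: "E_below leS ((i,x),(j,y)) ((k,u),(l,v))"
      have ij: "i = j" "i \<in> I" "(x,y) \<in> f i" using p R by auto
      have kl: "k = l" "k \<in> I" "u \<in> Xf k" "v \<in> Xf k" using q by auto
      have e12: "((k,u),(i,x)) \<in> leS \<and> ((j,y),(l,v)) \<in> leS" using pq by (simp only: E_below_def fst_conv snd_conv)
      have e1: "((k,u),(i,x)) \<in> leS" and e2: "((j,y),(l,v)) \<in> leS" using e12 by (rule conjunct1, rule conjunct2)
      have l1: "k = i" "(u,x) \<in> lef i" using e1 by auto
      have l2: "(y,v) \<in> lef i" using e2 ij(1) by auto
      have "E_below (lef i) (x,y) (u,v)" using l1 l2 by (simp add: E_below_def)
      moreover have "(u,v) \<in> Xf i \<times> Xf i" using kl l1 by simp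
      moreover have fu: "\<forall>p\<in>f i. \<forall>q\<in>Xf i \<times> Xf i. E_below (lef i) p q \<longrightarrow> q \<in> f i"
        using fi[OF ij(2)] by (simp add: up_sets_def)
      ultimately have "(u,v) \<in> f i" using ij(3) by blast
      then show "((k,u),(l,v)) \<in> R" using R ij kl l1 by simp
    qed
    show "R \<in> up_sets leS ES" using sub up unfolding up_sets_def by blast
  qed
  show "gS ` up_sets leS ES \<subseteq> (\<Pi>\<^sub>E i\<in>I. up_sets (lef i) (Xf i \<times> Xf i))"
  proof
    fix f assume "f \<in> gS ` up_sets leS ES"
    then obtain R where R: "R \<in> up_sets leS ES" and f: "f = gS R" by blast
    have RE: "R \<subseteq> ES" and Ru: "\<forall>p\<in>R. \<forall>q\<in>ES. E_below leS p q \<longrightarrow> q \<in> R"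
      using R by (auto simp: up_sets_def)
    have gSi: "gS R i \<in> up_sets (lef i) (Xf i \<times> Xf i)" if i: "i \<in> I" for i
      unfolding up_sets_def
    proof (intro CollectI conjI ballI impI)
      show "gS R i \<subseteq> Xf i \<times> Xf i" using RE i by (auto simp: gS_def)
      fix p q assume p: "p \<in> gS R i" and q: "q \<in> Xf i \<times> Xf i" and pq: "E_below (lef i) p q"
      obtain x y where xy: "p = (x,y)" by (cases p)
      obtain u v where uv: "q = (u,v)" by (cases q)
      have pR: "((i,x),(i,y)) \<in> R" using p i xy by (simp add: gS_def)
      have qE: "((i,u),(i,v)) \<in> ES" using q i uv by simp
      have "E_below leS ((i,x),(i,y)) ((i,u),(i,v))" using pq i xy uv by (simp add: E_below_def)
      then have "((i,u),(i,v)) \<in> R" using Ru pR qE by blast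
      then show "q \<in> gS R i" using i uv by (simp add: gS_def)
    qed
    show "f \<in> (\<Pi>\<^sub>E i\<in>I. up_sets (lef i) (Xf i \<times> Xf i))" unfolding f
    proof (rule PiE_I)
      show "\<And>i. i \<in> I \<Longrightarrow> gS R i \<in> up_sets (lef i) (Xf i \<times> Xf i)" by (rule gSi)
      show "\<And>i. i \<notin> I \<Longrightarrow> gS R i = undefined" by (simp add: gS_def)
    qed
  qed
qed

lemma hS_iso: "dq_iso DP BS hS"
  unfolding dq_iso_def
proof (intro conjI ballI)
  show "bij_betw hS (carrier DP) (carrier BS)"
    using hS_bij by (simp add: Dq_def dq_prod_def)
  fix f g
  show "hS (meet DP f g) = meet BS (hS f) (hS g)"
    by (simp add: Dq_def dq_prod_def) (rule rel_eqI2, auto)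
  show "hS (join DP f g) = join BS (hS f) (hS g)"
    by (simp add: Dq_def dq_prod_def) (rule rel_eqI2, auto)
  show "hS (comp DP f g) = comp BS (hS f) (hS g)"
    by (simp add: Dq_def dq_prod_def hS_comp)
next
  show "hS (one DP) = one BS"
    by (simp add: Dq_def dq_prod_def) (rule rel_eqI2, auto)
  show "hS (zero DP) = zero BS"
    by (simp add: Dq_def dq_prod_def del: Dq_zero_mem) (rule rel_eqI2, simp add: ZS_mem del: Dq_zero_mem)
next
  fix f
  show "hS (tilde DP f) = tilde BS (hS f)"
    by (simp add: Dq_def dq_prod_def del: Dq_zero_mem)
      (simp only: ZS_h ZS_h2 fgraph_hA fgraph_hB ES_h hS_conv hS_diff hS_comp hS_restrict)
  show "hS (minus DP f) = minus BS (hS f)"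
    by (simp add: Dq_def dq_prod_def del: Dq_zero_mem)
      (simp only: ZS_h ZS_h2 fgraph_hA fgraph_hB ES_h hS_conv hS_diff hS_comp hS_restrict)
  show "hS (prime DP f) = prime BS (hS f)"
    by (simp add: Dq_def dq_prod_def del: Dq_zero_mem)
      (simp only: ZS_h ZS_h2 fgraph_hA fgraph_hB ES_h hS_conv hS_diff hS_comp hS_restrict)
qed

end


theorem part2:
  fixes I :: "'i set" and F :: "'i \<Rightarrow> 'a rel dq_alg"
  assumes FD: "\<forall>i\<in>I. FDqRA (F i)"
  shows "\<exists>B :: ('i \<times> 'a) rel dq_alg. EDqRA B \<and> dq_isomorphic (dq_prod I F) B"
proof -
  have ex: "\<forall>i\<in>I. \<exists>X le a b. dq_frame X le (X \<times> X) a b \<and> F i = Dq X le (X \<times> X) a b"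
    using FD by (simp add: FDqRA_def)
  from bchoice[OF ex] obtain Xf where
    ex1: "\<forall>i\<in>I. \<exists>le a b. dq_frame (Xf i) le (Xf i \<times> Xf i) a b \<and> F i = Dq (Xf i) le (Xf i \<times> Xf i) a b"
    by blast
  from bchoice[OF ex1] obtain lef where
    ex2: "\<forall>i\<in>I. \<exists>a b. dq_frame (Xf i) (lef i) (Xf i \<times> Xf i) a b \<and> F i = Dq (Xf i) (lef i) (Xf i \<times> Xf i) a b"
    by blast
  from bchoice[OF ex2] obtain af where
    ex3: "\<forall>i\<in>I. \<exists>b. dq_frame (Xf i) (lef i) (Xf i \<times> Xf i) (af i) b \<and> F i = Dq (Xf i) (lef i) (Xf i \<times> Xf i) (af i) b"
    by blast
  from bchoice[OF ex3] obtain bf where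
    ex4: "\<forall>i\<in>I. dq_frame (Xf i) (lef i) (Xf i \<times> Xf i) (af i) (bf i) \<and> F i = Dq (Xf i) (lef i) (Xf i \<times> Xf i) (af i) (bf i)"
    by blast
  interpret sig I Xf lef af bf
    by unfold_locales (use ex4 in blast)
  have eqP: "dq_prod I F = DP" by (rule dq_prod_cong) (use ex4 in blast)
  show ?thesis
  proof (intro exI conjI)
    show "EDqRA BS" unfolding EDqRA_def using frameS by blast
    show "dq_isomorphic (dq_prod I F) BS" unfolding eqP dq_isomorphic_def using hS_iso by blast
  qed
qed

theorem theorem4p4:
  shows "(\<forall>A :: 'a rel dq_alg. EDqRA A \<longrightarrow>
            (\<exists>(I :: 'a set set) (F :: 'a set \<Rightarrow> 'a rel dq_alg).
               (\<forall>i\<in>I. FDqRA (F i)) \<and> dq_isomorphic A (dq_prod I F)))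
       \<and> (\<forall>(I :: 'i set) (F :: 'i \<Rightarrow> 'a rel dq_alg). (\<forall>i\<in>I. FDqRA (F i)) \<longrightarrow>
            (\<exists>B :: ('i \<times> 'a) rel dq_alg. EDqRA B \<and> dq_isomorphic (dq_prod I F) B))"
  using part1 part2 by blast


end
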